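(* Let $d\ge 2$ and let $P\in\mathbb{C}[x_0,x_1,x_2]$ be a homogeneous polynomial (ternary form) of degree $d$ with $\mathrm{Cr}(P)\ge 2$. Then $\mathrm{r}(P)\le(\mathrm{Cr}(P)-1)d$.
   Context: The rank $\mathrm{r}(P)$ is the minimum $r$ such that $P=L_1^d+\cdots+L_r^d$ with $L_i$ linear forms. Let $\nu_d:\mathbb{P}^2\to\mathbb{P}^N$, $N=\binom{d+2}{2}-1$, be the degree $d$ Veronese embedding with image $X_{2,d}$, and $[P]$ the projective class of $P$. A zero-dimensional scheme is curvilinear if the Zariski tangent space at each point of its support has dimension $\le 1$. The curvilinear rank is $\mathrm{Cr}(P)=\min\{\deg(Z): Z\subset X_{2,d}$ zero-dimensional curvilinear with $[P]\in\langle Z\rangle\}$, $\langle Z\rangle$ being the linear span of $Z$. *)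

theory Defs
  imports Complex_Main "HOL-Computational_Algebra.Polynomial"
begin

type_synonym vec3 = "complex \<times> complex \<times> complex"

definition lin :: "vec3 \<Rightarrow> vec3 \<Rightarrow> complex" where
  "lin l x = (case l of (a0,a1,a2) \<Rightarrow> case x of (x0,x1,x2) \<Rightarrow> a0*x0 + a1*x1 + a2*x2)"

definition smul3 :: "complex \<Rightarrow> vec3 \<Rightarrow> vec3" where
  "smul3 c v = (case v of (a,b,e) \<Rightarrow> (c*a, c*b, c*e))"

definition add3 :: "vec3 \<Rightarrow> vec3 \<Rightarrow> vec3" where
  "add3 u v = (case u of (a,b,e) \<Rightarrow> case v of (a',b',e') \<Rightarrow> (a+a', b+b', e+e'))"

definition indep2 :: "vec3 \<Rightarrow> vec3 \<Rightarrow> bool" where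
  "indep2 u v \<longleftrightarrow> (\<forall>a b. add3 (smul3 a u) (smul3 b v) = (0,0,0) \<longrightarrow> a = 0 \<and> b = 0)"

definition is_ternary_form :: "nat \<Rightarrow> (vec3 \<Rightarrow> complex) \<Rightarrow> bool" where
  "is_ternary_form d P \<longleftrightarrow> (\<exists>c :: nat \<Rightarrow> nat \<Rightarrow> complex. \<forall>x0 x1 x2.
      P (x0,x1,x2) = (\<Sum>(a,b)\<in>{(a,b). a + b \<le> d}. c a b * x0^a * x1^b * x2^(d-a-b)))"

definition waring_rank :: "nat \<Rightarrow> (vec3 \<Rightarrow> complex) \<Rightarrow> nat" where
  "waring_rank d P = (LEAST r. \<exists>L :: nat \<Rightarrow> vec3. P = (\<lambda>x. \<Sum>i<r. (lin (L i) x)^d))"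

text \<open>A curvilinear scheme of length k supported at the point [l_0] of P^2 is the image of
  Spec C[t]/(t^k) under a germ t \<mapsto> [l_0 + t l_1 + ... + t^(k-1) l_(k-1)] with l_0 \<noteq> 0 and
  (if k \<ge> 2) l_0, l_1 linearly independent. The linear span of its image under \<nu>_d is spanned by
  the t^j-coefficients (j < k) of (l_0 + t l_1 + ...)^d, viewed as forms in x.\<close>
definition jet_form :: "nat \<Rightarrow> nat \<Rightarrow> (nat \<Rightarrow> vec3) \<Rightarrow> nat \<Rightarrow> vec3 \<Rightarrow> complex" where
  "jet_form d k l j = (\<lambda>x. coeff ((\<Sum>s<k. monom (lin (l s) x) s) ^ d) j)"

definition curvilinear_rank :: "nat \<Rightarrow> (vec3 \<Rightarrow> complex) \<Rightarrow> nat" where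
  "curvilinear_rank d P = (LEAST n. \<exists>(m::nat) (ks :: nat \<Rightarrow> nat) (l :: nat \<Rightarrow> nat \<Rightarrow> vec3)
       (c :: nat \<Rightarrow> nat \<Rightarrow> complex).
     (\<forall>i<m. ks i \<ge> 1 \<and> l i 0 \<noteq> (0,0,0) \<and> (ks i \<ge> 2 \<longrightarrow> indep2 (l i 0) (l i 1))) \<and>
     (\<forall>i<m. \<forall>i'<m. i \<noteq> i' \<longrightarrow> indep2 (l i 0) (l i' 0)) \<and>
     n = (\<Sum>i<m. ks i) \<and>
     P = (\<lambda>x. \<Sum>i<m. \<Sum>j<ks i. c i j * jet_form d (ks i) (l i) j x))"

end

theory Submission
  imports Defs
begin

lemma lagrange_coeff:
  fixes t :: "nat \<Rightarrow> complex"
  assumes inj: "inj_on t {..<N}"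
  shows "\<exists>W. \<forall>p j. degree p < N \<longrightarrow> coeff p j = (\<Sum>i<N. W j i * poly p (t i))"
proof -
  define B where "B i = (\<Prod>i'\<in>{..<N}-{i}. [:- t i', 1:])" for i
  define den where "den i = (\<Prod>i'\<in>{..<N}-{i}. (t i - t i'))" for i
  define ell where "ell i = smult (1 / den i) (B i)" for i
  have polyB: "poly (B i) x = (\<Prod>i'\<in>{..<N}-{i}. (x - t i'))" for i x
    unfolding B_def poly_prod by simp
  have den_nz: "den i \<noteq> 0" if "i < N" for i
    unfolding den_def using inj that by (auto simp: inj_on_def)
  have ell_at: "poly (ell i) (t i') = (if i = i' then 1 else 0)" if "i < N" "i' < N" for i i'
  proof (cases "i = i'")
    case True
    then show ?thesis using den_nz[OF that(1)] by (simp add: ell_def polyB den_def)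
  next
    case False
    have "(\<Prod>i''\<in>{..<N}-{i}. (t i' - t i'')) = 0"
      by (rule prod_zero) (use that False in auto)
    then show ?thesis using False by (simp add: ell_def polyB)
  qed
  have degB: "degree (B i) \<le> N - 1" if "i < N" for i
  proof -
    have "degree (B i) \<le> sum (degree \<circ> (\<lambda>i'. [:- t i', 1:])) ({..<N}-{i})"
      unfolding B_def by (rule degree_prod_sum_le) simp
    also have "\<dots> = card ({..<N}-{i})" by simp
    also have "\<dots> = N - 1" using that by simp
    finally show ?thesis .
  qed
  have degell: "degree (ell i) < N" if "i < N" for i
    using degB[OF that] that degree_smult_le[of "1 / den i" "B i"] unfolding ell_def by linarith
  show ?thesis
  proof (intro exI allI impI)
    fix p :: "complex poly" and j
    assume dp: "degree p < N"
    define r where "r = p - (\<Sum>i<N. smult (poly p (t i)) (ell i))"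
    have dr: "degree r < N"
      unfolding r_def
    proof (rule degree_diff_less[OF dp])
      show "degree (\<Sum>i<N. smult (poly p (t i)) (ell i)) < N"
        using dp
        by (intro degree_sum_less) (auto intro: le_less_trans[OF degree_smult_le] degell)
    qed
    have rt: "poly r (t i') = 0" if "i' < N" for i'
    proof -
      have "(\<Sum>i<N. poly p (t i) * poly (ell i) (t i')) = (\<Sum>i<N. if i = i' then poly p (t i) else 0)"
        by (rule sum.cong) (use that ell_at in auto)
      also have "\<dots> = poly p (t i')" using that by simp
      finally show ?thesis unfolding r_def by (simp add: poly_sum)
    qed
    have "r = 0"
    proof (rule ccontr)
      assume "r \<noteq> 0"
      then have fin: "finite {x. poly r x = 0}" and cb: "card {x. poly r x = 0} \<le> degree r"
        using poly_roots_finite card_poly_roots_bound by auto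
      have "t ` {..<N} \<subseteq> {x. poly r x = 0}" using rt by auto
      then have "card (t ` {..<N}) \<le> card {x. poly r x = 0}" using fin by (rule card_mono[rotated])
      moreover have "card (t ` {..<N}) = N" using inj by (simp add: card_image)
      ultimately show False using cb dr by linarith
    qed
    then have "p = (\<Sum>i<N. smult (poly p (t i)) (ell i))" unfolding r_def by simp
    then have "coeff p j = coeff (\<Sum>i<N. smult (poly p (t i)) (ell i)) j" by simp
    also have "\<dots> = (\<Sum>i<N. coeff (ell i) j * poly p (t i))" by (simp add: coeff_sum mult.commute)
    finally show "coeff p j = (\<Sum>i<N. coeff (ell i) j * poly p (t i))" .
  qed
qed


lemma ex_root: "n > 0 \<Longrightarrow> \<exists>z::complex. z ^ n = c"
proof (cases "c = 0")
  case True
  assume "n > 0" then show ?thesis using True by (intro exI[of _ 0]) simp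
next
  case False
  assume n: "n > 0"
  define f where "f = (\<lambda>z. (root n (norm c) * cis (Arg c / n)) * z)"
  have im: "f ` {z. z ^ n = 1} = {z. z ^ n = c}"
    using bij_betw_imp_surj_on[OF bij_betw_nth_root_unity[OF False n]] unfolding f_def .
  have "f 1 \<in> f ` {z. z ^ n = 1}" by simp
  then have "f 1 \<in> {z. z ^ n = c}" by (simp only: im)
  then show ?thesis by blast
qed

definition dec :: "nat \<Rightarrow> nat \<Rightarrow> (vec3 \<Rightarrow> complex) \<Rightarrow> bool" where
  "dec d r F \<longleftrightarrow> (\<exists>L::nat \<Rightarrow> vec3. F = (\<lambda>x. \<Sum>i<r. lin (L i) x ^ d))"

lemma dec_rank: "dec d r P \<Longrightarrow> waring_rank d P \<le> r"
  unfolding dec_def waring_rank_def by (rule Least_le)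

lemma lin_zero[simp]: "lin (0,0,0) x = 0"
  by (cases x) (simp add: lin_def)

lemma lin_smul3: "lin (smul3 z v) x = z * lin v x"
  by (cases x; cases v) (simp add: lin_def smul3_def algebra_simps)

lemma dec_zero: "dec d 0 (\<lambda>x. 0)"
  unfolding dec_def by simp

lemma dec_one: "d \<ge> 1 \<Longrightarrow> dec d 1 (\<lambda>x. w * lin v x ^ d)"
proof -
  assume "d \<ge> 1"
  then obtain z where z: "z ^ d = w" using ex_root[of d w] by auto
  show ?thesis unfolding dec_def
    by (intro exI[of _ "\<lambda>_. smul3 z v"]) (simp add: lin_smul3 power_mult_distrib z)
qed

lemma sum_split_add: "(\<Sum>i<r+s. f i) = (\<Sum>i<r. f i) + (\<Sum>i<s. f (r + i))" for f :: "nat \<Rightarrow> 'a::comm_monoid_add"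
  by (induction s) (simp_all add: add.assoc)

lemma dec_add: "dec d r F \<Longrightarrow> dec d s G \<Longrightarrow> dec d (r + s) (\<lambda>x. F x + G x)"
proof -
  assume "dec d r F" "dec d s G"
  then obtain L M where F: "F = (\<lambda>x. \<Sum>i<r. lin (L i) x ^ d)" and G: "G = (\<lambda>x. \<Sum>i<s. lin (M i) x ^ d)"
    unfolding dec_def by auto
  show ?thesis unfolding dec_def
  proof (intro exI[of _ "\<lambda>i. if i < r then L i else M (i - r)"] ext)
    fix x
    show "F x + G x = (\<Sum>i<r + s. lin (if i < r then L i else M (i - r)) x ^ d)"
      unfolding sum_split_add F G by simp
  qed
qed

lemma dec_mono: "d \<ge> 1 \<Longrightarrow> r \<le> r' \<Longrightarrow> dec d r F \<Longrightarrow> dec d r' F"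
proof -
  assume d: "d \<ge> 1" and rr: "r \<le> r'" and "dec d r F"
  have "dec d (r' - r) (\<lambda>x. 0)"
    unfolding dec_def using d by (intro exI[of _ "\<lambda>_. (0,0,0)"]) (simp add: power_0_left)
  from dec_add[OF \<open>dec d r F\<close> this] rr show ?thesis by simp
qed

lemma dec_sum: fixes m :: nat shows "(\<And>i. i < m \<Longrightarrow> dec d (r i) (F i)) \<Longrightarrow> dec d (\<Sum>i<m. r i) (\<lambda>x. \<Sum>i<m. F i x)"
proof (induction m)
  case 0
  then show ?case using dec_zero by simp
next
  case (Suc m)
  have "dec d ((\<Sum>i<m. r i) + r m) (\<lambda>x. (\<Sum>i<m. F i x) + F m x)"
    using Suc by (intro dec_add) auto
  then show ?case by simp
qed

lemma dec_comb: "d \<ge> 1 \<Longrightarrow> dec d N (\<lambda>x. \<Sum>i<N. w i * lin (v i) x ^ d)"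
  using dec_sum[of N d "\<lambda>_. 1" "\<lambda>i x. w i * lin (v i) x ^ d"] dec_one by simp

lemma lin_alt: "lin l x = fst l * fst x + fst (snd l) * fst (snd x) + snd (snd l) * snd (snd x)"
  by (cases l; cases x) (simp add: lin_def)

definition Vt :: "nat \<Rightarrow> (nat \<Rightarrow> vec3) \<Rightarrow> complex \<Rightarrow> vec3" where
  "Vt k l t = ((\<Sum>s<k. t^s * fst (l s)), (\<Sum>s<k. t^s * fst (snd (l s))), (\<Sum>s<k. t^s * snd (snd (l s))))"

lemma lin_Vt: "lin (Vt k l t) x = (\<Sum>s<k. lin (l s) x * t ^ s)"
  unfolding Vt_def lin_alt by (simp add: sum_distrib_left sum.distrib algebra_simps)

lemma sum_const_coeff: "k > 0 \<Longrightarrow> (\<Sum>j<k. c j * coeff [:a:] j) = c 0 * (a::complex)"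
proof -
  assume "k > 0"
  then obtain k' where "k = Suc k'" by (cases k) auto
  then show ?thesis by (simp only: sum.lessThan_Suc_shift) simp
qed

lemma choose_br:
  fixes c :: "nat \<Rightarrow> complex"
  assumes kD: "k \<le> D" and k: "k \<ge> 1"
  shows "\<exists>b r. r \<noteq> 0 \<and> (\<Sum>j<k. c j * coeff ([:-b,1:]^D) j) = c 0 * r ^ D"
proof (cases "c 0 = 0")
  case True
  have "(\<Sum>j<k. c j * coeff ([:-0,1:]^D) j) = 0"
  proof (rule sum.neutral, rule ballI)
    fix j assume "j \<in> {..<k}"
    then have "j < D" using kD by auto
    then show "c j * coeff ([:-0,1:]^D) j = 0"
      by (simp add: coeff_linear_poly_power)
  qed
  then show ?thesis using True by (intro exI[of _ 0] exI[of _ 1]) simp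
next
  case False
  have D: "D > 0" using kD k by simp
  define hp where "hp = (\<Sum>j<k. monom (c j * of_nat (D choose j) * (-1)^(D-j)) (D-j))"
  have ph: "poly hp b = (\<Sum>j<k. c j * coeff ([:-b,1:]^D) j)" for b
    unfolding hp_def poly_sum poly_monom
  proof (rule sum.cong[OF refl])
    fix j assume "j \<in> {..<k}"
    then have "j \<le> D" using kD by auto
    then show "c j * of_nat (D choose j) * (-1)^(D-j) * b ^ (D - j) = c j * coeff ([:-b,1:]^D) j"
      by (simp add: coeff_linear_poly_power power_minus[of b])
  qed
  have "coeff hp D = (\<Sum>j<k. if j = 0 then c j * of_nat (D choose j) * (-1)^(D-j) else 0)"
    unfolding hp_def coeff_sum coeff_monom
  proof (rule sum.cong[OF refl])
    fix j assume "j \<in> {..<k}"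
    then have "j \<le> D" using kD by auto
    then have "(D - j = D) = (j = 0)" using D by auto
    then show "(if D - j = D then c j * of_nat (D choose j) * (-1)^(D-j) else 0) =
               (if j = 0 then c j * of_nat (D choose j) * (-1)^(D-j) else 0)" by simp
  qed
  also have "\<dots> = c 0 * (-1)^D" using k by simp
  finally have "coeff hp D \<noteq> 0" using False by simp
  then have "hp \<noteq> 0" by auto
  then have "finite {x. poly hp x = 0}" by (rule poly_roots_finite)
  then obtain b where b: "b \<notin> {x. poly hp x = 0}"
    using ex_new_if_finite[OF infinite_UNIV_char_0] by blast
  obtain r where r: "r ^ D = poly hp b / c 0" using ex_root[OF D] by blast
  have "r \<noteq> 0" using r b D False by (auto simp: power_0_left)
  moreover have "(\<Sum>j<k. c j * coeff ([:-b,1:]^D) j) = c 0 * r ^ D"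
    using r False by (simp add: ph[symmetric])
  ultimately show ?thesis by blast
qed


lemma comp_dec:
  assumes d: "d \<ge> 2" and k: "k \<ge> 2"
  shows "dec d ((k-1)*d) (\<lambda>x. \<Sum>j<k. c j * jet_form d k l j x)"
proof -
  define D where "D = (k-1)*d"
  have "(k-1)*2 \<le> (k-1)*d" using d by simp
  then have kD: "k \<le> D" and D0: "D > 0" unfolding D_def using k by linarith+
  obtain b r where r0: "r \<noteq> 0" and cond: "(\<Sum>j<k. c j * coeff ([:-b,1:]^D) j) = c 0 * r ^ D"
  proof -
    have "\<exists>b r. r \<noteq> 0 \<and> (\<Sum>j<k. c j * coeff ([:-b,1:]^D) j) = c 0 * r ^ D"
      using choose_br[of k D c] kD k by simp
    then show ?thesis using that by blast
  qed
  define \<omega> where "\<omega> i = cis (2 * pi * real i / real D)" for i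
  have bij: "bij_betw \<omega> {..<D} {z. z ^ D = 1}" unfolding \<omega>_def by (rule bij_betw_roots_unity[OF D0])
  have injw: "inj_on \<omega> {..<D}" using bij by (rule bij_betw_imp_inj_on)
  have wD: "\<omega> i ^ D = 1" if "i < D" for i
    using bij_betw_imp_surj_on[OF bij] that by auto
  define t where "t i = b + r * \<omega> i" for i
  have injt: "inj_on t {..<D}"
    using injw r0 unfolding inj_on_def t_def by auto
  obtain W where W: "\<And>p j. degree p < D \<Longrightarrow> coeff p j = (\<Sum>i<D. W j i * poly p (t i))"
    using lagrange_coeff[OF injt] by blast
  define q where "q = [:-b,1:]^D - [:r^D:]"
  have qt: "poly q (t i) = 0" if "i < D" for i
    using wD[OF that] by (simp add: q_def t_def power_mult_distrib)
  have qD: "coeff q D = 1"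
  proof -
    have "coeff [:r^D:] D = 0" using D0 by (cases D) simp_all
    moreover have "coeff ([:-b,1:]^D) D = 1" by (rule coeff_linear_power)
    ultimately show ?thesis unfolding q_def coeff_diff by simp
  qed
  have degq: "degree q \<le> D"
    unfolding q_def
  proof (rule degree_diff_le)
    show "degree ([:- b, 1:] ^ D) \<le> D" using degree_power_le[of "[:- b, 1:]" D] by simp
  qed simp
  have qsum: "(\<Sum>j<k. c j * coeff q j) = 0"
  proof -
    have "(\<Sum>j<k. c j * coeff q j) = (\<Sum>j<k. c j * coeff ([:-b,1:]^D) j) - (\<Sum>j<k. c j * coeff [:r^D:] j)"
      unfolding q_def coeff_diff by (simp add: right_diff_distrib sum_subtractf)
    also have "\<dots> = 0" using cond sum_const_coeff[of k c "r^D"] k by simp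
    finally show ?thesis .
  qed
  define w where "w i = (\<Sum>j<k. c j * W j i)" for i
  have eq: "(\<Sum>j<k. c j * jet_form d k l j x) = (\<Sum>i<D. w i * lin (Vt k l (t i)) x ^ d)" for x
  proof -
    define g where "g = (\<Sum>s<k. monom (lin (l s) x) s)^d"
    have "degree (\<Sum>s<k. monom (lin (l s) x) s) \<le> k - 1"
      by (rule degree_sum_le) (auto intro: order.trans[OF degree_monom_le])
    then have degg: "degree g \<le> D"
      unfolding g_def D_def using degree_power_le[of "\<Sum>s<k. monom (lin (l s) x) s" d]
      by (meson le_trans mult_le_mono1)
    define lc where "lc = coeff g D"
    define h where "h = g - smult lc q"
    have dh: "degree h \<le> D" unfolding h_def
      by (rule degree_diff_le[OF degg]) (rule order.trans[OF degree_smult_le degq])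
    have chD: "coeff h D = 0" unfolding h_def lc_def using qD by simp
    have dh2: "degree h < D"
    proof (rule ccontr)
      assume "\<not> degree h < D"
      then have "degree h = D" using dh by simp
      then have "h = 0" using chD by (metis leading_coeff_0_iff)
      then show False using \<open>degree h = D\<close> D0 by simp
    qed
    have pg: "poly g (t i) = lin (Vt k l (t i)) x ^ d" for i
      unfolding g_def poly_power poly_sum poly_monom lin_Vt ..
    have cg: "coeff g j = lc * coeff q j + (\<Sum>i<D. W j i * lin (Vt k l (t i)) x ^ d)" for j
    proof -
      have "coeff g j = lc * coeff q j + coeff h j" unfolding h_def by simp
      also have "coeff h j = (\<Sum>i<D. W j i * poly h (t i))" by (rule W[OF dh2])
      also have "\<dots> = (\<Sum>i<D. W j i * lin (Vt k l (t i)) x ^ d)"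
        by (rule sum.cong[OF refl]) (simp add: h_def qt pg)
      finally show ?thesis .
    qed
    have "(\<Sum>j<k. c j * jet_form d k l j x) = (\<Sum>j<k. c j * coeff g j)"
      unfolding jet_form_def g_def ..
    also have "\<dots> = lc * (\<Sum>j<k. c j * coeff q j) + (\<Sum>j<k. \<Sum>i<D. c j * W j i * lin (Vt k l (t i)) x ^ d)"
      unfolding cg by (simp add: algebra_simps sum.distrib sum_distrib_left)
    also have "\<dots> = (\<Sum>i<D. w i * lin (Vt k l (t i)) x ^ d)"
      unfolding qsum w_def by (simp add: sum_distrib_right sum.swap[of _ "{..<k}"])
    finally show ?thesis .
  qed
  have "dec d D (\<lambda>x. \<Sum>i<D. w i * lin (Vt k l (t i)) x ^ d)"
    using d by (intro dec_comb) simp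
  then show ?thesis using eq unfolding D_def by simp
qed


lemma comp_dec1:
  assumes d: "d \<ge> 1"
  shows "dec d 1 (\<lambda>x. \<Sum>j<1. c j * jet_form d 1 l j x)"
proof -
  have "(\<lambda>x. \<Sum>j<1. c j * jet_form d 1 l j x) = (\<lambda>x. c 0 * lin (l 0) x ^ d)"
    by (simp add: jet_form_def monom_0 poly_const_pow)
  then show ?thesis using dec_one[OF d] by simp
qed

lemma comp_dec_gen:
  assumes d: "d \<ge> 2" and k: "k \<ge> 1"
  shows "dec d (if k = 1 then 1 else (k-1)*d) (\<lambda>x. \<Sum>j<k. c j * jet_form d k l j x)"
proof (cases "k = 1")
  case True
  then show ?thesis using comp_dec1[of d c l] d by simp
next
  case False
  then show ?thesis using comp_dec[OF d, of k c l] k by simp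
qed

lemma form_span:
  assumes "is_ternary_form d P"
  shows "\<exists>C::nat\<Rightarrow>nat\<Rightarrow>complex. \<forall>x. P x = (\<Sum>u<d+1. \<Sum>s<d+1. C s u * lin (1, of_nat s, of_nat u) x ^ d)"
proof -
  obtain c :: "nat \<Rightarrow> nat \<Rightarrow> complex" where c: "\<And>x0 x1 x2.
      P (x0,x1,x2) = (\<Sum>(a,b)\<in>{(a,b). a + b \<le> d}. c a b * x0^a * x1^b * x2^(d-a-b))"
    using assms unfolding is_ternary_form_def by blast
  have injt: "inj_on (\<lambda>i. of_nat i :: complex) {..<d+1}" by (simp add: inj_on_def)
  obtain W where W: "\<And>(p::complex poly) j. degree p < d+1 \<Longrightarrow> coeff p j = (\<Sum>i<d+1. W j i * poly p (of_nat i))"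
    using lagrange_coeff[OF injt] by blast
  define S where "S = {(a,b). a + b \<le> (d::nat)}"
  have finS: "finite S" by (rule finite_subset[of _ "{..d} \<times> {..d}"]) (auto simp: S_def)
  define K where "K a b = c a b / (of_nat (d choose b) * of_nat ((d-b) choose (d-a-b)))" for a b
  define C where "C s u = (\<Sum>(a,b)\<in>S. K a b * W (d-a-b) u * W b s)" for s u
  have deg1: "degree [:a0, b0:] \<le> 1" for a0 b0 :: complex by (simp add: degree_pCons_eq_if)
  have key: "x0^a * x1^b * x2^(d-a-b) * (of_nat (d choose b) * of_nat ((d-b) choose (d-a-b))) =
     (\<Sum>u<d+1. \<Sum>s<d+1. W (d-a-b) u * W b s * lin (1, of_nat s, of_nat u) (x0,x1,x2) ^ d)"
    if ab: "a + b \<le> d" for a b x0 x1 x2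
  proof -
    define e where "e = d - a - b"
    have E1: "of_nat (d choose b) * x1^b * (x0 + of_nat u * x2)^(d-b) =
        (\<Sum>s<d+1. W b s * lin (1, of_nat s, of_nat u) (x0,x1,x2) ^ d)" for u
    proof -
      define p where "p = [:x0 + of_nat u * x2, x1:]^d"
      have "degree p \<le> 1 * d" unfolding p_def using deg1
        by (rule order.trans[OF degree_power_le mult_le_mono1])
      then have "coeff p b = (\<Sum>s<d+1. W b s * poly p (of_nat s))" by (intro W) simp
      moreover have "coeff p b = of_nat (d choose b) * x1^b * (x0 + of_nat u * x2)^(d-b)"
        unfolding p_def using ab by (simp add: coeff_linear_poly_power)
      moreover have "poly p (of_nat s) = lin (1, of_nat s, of_nat u) (x0,x1,x2) ^ d" for s
        unfolding p_def by (simp add: lin_def poly_power algebra_simps)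
      ultimately show ?thesis by simp
    qed
    have E2: "of_nat ((d-b) choose e) * x2^e * x0^(d-b-e) =
        (\<Sum>u<d+1. W e u * (x0 + of_nat u * x2)^(d-b))"
    proof -
      define p where "p = [:x0, x2:]^(d-b)"
      have "degree p \<le> 1 * (d - b)" unfolding p_def using deg1
        by (rule order.trans[OF degree_power_le mult_le_mono1])
      then have "coeff p e = (\<Sum>u<d+1. W e u * poly p (of_nat u))" by (intro W) simp
      moreover have "coeff p e = of_nat ((d-b) choose e) * x2^e * x0^(d-b-e)"
        unfolding p_def e_def using ab by (simp add: coeff_linear_poly_power)
      moreover have "poly p (of_nat u) = (x0 + of_nat u * x2)^(d-b)" for u
        unfolding p_def by (simp add: poly_power algebra_simps)
      ultimately show ?thesis by simp
    qed
    have ae: "d - b - e = a" unfolding e_def using ab by simp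
    have "x0^a * x1^b * x2^(d-a-b) * (of_nat (d choose b) * of_nat ((d-b) choose (d-a-b)))
        = (of_nat ((d-b) choose e) * x2^e * x0^(d-b-e)) * (of_nat (d choose b) * x1^b)"
      unfolding ae by (simp add: e_def algebra_simps)
    also have "\<dots> = (\<Sum>u<d+1. W e u * (of_nat (d choose b) * x1^b * (x0 + of_nat u * x2)^(d-b)))"
      unfolding E2 sum_distrib_right by (simp add: mult_ac)
    also have "\<dots> = (\<Sum>u<d+1. \<Sum>s<d+1. W e u * W b s * lin (1, of_nat s, of_nat u) (x0,x1,x2) ^ d)"
      by (rule sum.cong[OF refl]) (unfold E1, simp only: sum_distrib_left mult.assoc)
    finally show ?thesis unfolding e_def .
  qed
  show ?thesis
  proof (intro exI allI)
    fix x :: vec3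
    obtain x0 x1 x2 where x: "x = (x0,x1,x2)" by (cases x) auto
    have "P x = (\<Sum>(a,b)\<in>S. c a b * x0^a * x1^b * x2^(d-a-b))" unfolding x c S_def ..
    also have "\<dots> = (\<Sum>(a,b)\<in>S. K a b * (\<Sum>u<d+1. \<Sum>s<d+1. W (d-a-b) u * W b s * lin (1, of_nat s, of_nat u) x ^ d))"
    proof (rule sum.cong[OF refl], clarify)
      fix a b assume "(a,b) \<in> S"
      then have ab: "a + b \<le> d" by (simp add: S_def)
      have nz: "(of_nat (d choose b) * of_nat ((d-b) choose (d-a-b)) :: complex) \<noteq> 0"
        using ab by simp
      show "c a b * x0^a * x1^b * x2^(d-a-b) = K a b * (\<Sum>u<d+1. \<Sum>s<d+1. W (d-a-b) u * W b s * lin (1, of_nat s, of_nat u) x ^ d)"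
        unfolding x key[OF ab, symmetric] K_def using nz by (simp add: field_simps)
    qed
    also have "\<dots> = (\<Sum>u<d+1. \<Sum>s<d+1. C s u * lin (1, of_nat s, of_nat u) x ^ d)"
      unfolding C_def
      by (simp add: sum_distrib_left sum_distrib_right case_prod_unfold sum.swap[of _ S] algebra_simps)
    finally show "P x = (\<Sum>u<d+1. \<Sum>s<d+1. C s u * lin (1, of_nat s, of_nat u) x ^ d)" .
  qed
qed


lemma sum_divmod:
  fixes F :: "nat \<Rightarrow> nat \<Rightarrow> 'a::comm_monoid_add"
  assumes n: "n > 0"
  shows "(\<Sum>i<m*n. F (i mod n) (i div n)) = (\<Sum>u<m. \<Sum>s<n. F s u)"
proof (induction m)
  case 0 then show ?case by simp
next
  case (Suc m)
  have "(\<Sum>i<Suc m * n. F (i mod n) (i div n)) = (\<Sum>i<m*n + n. F (i mod n) (i div n))"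
    by (simp add: add.commute)
  also have "\<dots> = (\<Sum>i<m*n. F (i mod n) (i div n)) + (\<Sum>i<n. F ((m*n + i) mod n) ((m*n + i) div n))"
    by (rule sum_split_add)
  also have "(\<Sum>i<n. F ((m*n + i) mod n) ((m*n + i) div n)) = (\<Sum>s<n. F s m)"
    by (rule sum.cong[OF refl]) (simp add: n)
  finally show ?case using Suc by simp
qed

lemma cr_exists:
  assumes "is_ternary_form d P"
  shows "\<exists>n. \<exists>(m::nat) (ks :: nat \<Rightarrow> nat) (l :: nat \<Rightarrow> nat \<Rightarrow> vec3)
       (c :: nat \<Rightarrow> nat \<Rightarrow> complex).
     (\<forall>i<m. ks i \<ge> 1 \<and> l i 0 \<noteq> (0,0,0) \<and> (ks i \<ge> 2 \<longrightarrow> indep2 (l i 0) (l i 1))) \<and>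
     (\<forall>i<m. \<forall>i'<m. i \<noteq> i' \<longrightarrow> indep2 (l i 0) (l i' 0)) \<and>
     n = (\<Sum>i<m. ks i) \<and>
     P = (\<lambda>x. \<Sum>i<m. \<Sum>j<ks i. c i j * jet_form d (ks i) (l i) j x)"
proof -
  obtain C where C: "\<And>x. P x = (\<Sum>u<d+1. \<Sum>s<d+1. C s u * lin (1, of_nat s, of_nat u) x ^ d)"
    using form_span[OF assms] by blast
  define N where "N = d + 1"
  define m where "m = N * N"
  define l :: "nat \<Rightarrow> nat \<Rightarrow> vec3" where "l i = (\<lambda>_. (1, of_nat (i mod N), of_nat (i div N)))" for i
  define c where "c i = (\<lambda>_::nat. C (i mod N) (i div N))" for i
  have jet1: "jet_form d (Suc 0) v 0 x = lin (v 0) x ^ d" for v x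
    by (simp add: jet_form_def monom_0 poly_const_pow)
  have indep: "indep2 (l i 0) (l i' 0)" if "i \<noteq> i'" for i i'
    unfolding indep2_def
  proof (intro allI impI)
    fix a b
    assume "add3 (smul3 a (l i 0)) (smul3 b (l i' 0)) = (0,0,0)"
    then have e: "a + b = 0" "a * of_nat (i mod N) + b * of_nat (i' mod N) = 0"
                 "a * of_nat (i div N) + b * of_nat (i' div N) = 0"
      by (simp_all add: l_def add3_def smul3_def)
    have "a = 0"
    proof (rule ccontr)
      assume a: "a \<noteq> 0"
      have b: "b = -a" using minus_unique[OF e(1)] by simp
      have "a * (of_nat (i mod N) - of_nat (i' mod N)) = 0" using e(2) b by (simp add: algebra_simps)
      then have "(of_nat (i mod N) :: complex) = of_nat (i' mod N)" using a by simp
      then have m1: "i mod N = i' mod N" by (simp only: of_nat_eq_iff)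
      have "a * (of_nat (i div N) - of_nat (i' div N)) = 0" using e(3) b by (simp add: algebra_simps)
      then have "(of_nat (i div N) :: complex) = of_nat (i' div N)" using a by simp
      then have m2: "i div N = i' div N" by (simp only: of_nat_eq_iff)
      have "i = i'" using m1 m2 by (metis div_mult_mod_eq)
      then show False using that by simp
    qed
    then show "a = 0 \<and> b = 0" using e(1) by simp
  qed
  have "P = (\<lambda>x. \<Sum>i<m. \<Sum>j<(\<lambda>_. 1::nat) i. c i j * jet_form d ((\<lambda>_. 1) i) (l i) j x)"
  proof
    fix x
    have "(\<Sum>i<m. \<Sum>j<(\<lambda>_. 1::nat) i. c i j * jet_form d ((\<lambda>_. 1) i) (l i) j x)
        = (\<Sum>i<N * N. C (i mod N) (i div N) * lin (1, of_nat (i mod N), of_nat (i div N)) x ^ d)"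
      by (simp add: m_def c_def jet1 l_def)
    also have "\<dots> = (\<Sum>u<N. \<Sum>s<N. C s u * lin (1, of_nat s, of_nat u) x ^ d)"
      by (rule sum_divmod[of N "\<lambda>s u. C s u * lin (1, of_nat s, of_nat u) x ^ d"]) (simp add: N_def)
    finally show "P x = (\<Sum>i<m. \<Sum>j<(\<lambda>_. 1::nat) i. c i j * jet_form d ((\<lambda>_. 1) i) (l i) j x)"
      using C[of x] by (simp add: N_def)
  qed
  moreover have "\<forall>i<m. (\<lambda>_. 1::nat) i \<ge> 1 \<and> l i 0 \<noteq> (0,0,0) \<and> ((\<lambda>_. 1::nat) i \<ge> 2 \<longrightarrow> indep2 (l i 0) (l i 1))"
    by (simp add: l_def)
  ultimately show ?thesis using indep
    by (intro exI[of _ "\<Sum>i<m. (1::nat)"] exI[of _ m] exI[of _ "\<lambda>_. 1::nat"] exI[of _ l] exI[of _ c]) auto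
qed

lemma arith_bound:
  fixes ks :: "nat \<Rightarrow> nat"
  assumes d: "d \<ge> 2" and ks: "\<forall>i<m. ks i \<ge> 1" and n: "(\<Sum>i<m. ks i) \<ge> 2"
  shows "(\<Sum>i<m. (if ks i = 1 then 1 else (ks i - 1) * d)) \<le> ((\<Sum>i<m. ks i) - 1) * d"
proof -
  define f where "f k = (if k = 1 then 1 else (k - 1) * d)" for k
  define n where "n = (\<Sum>i<m. ks i)"
  have fk: "f k + d \<le> k * d + 1" if "k \<ge> 1" for k
  proof (cases k)
    case 0 then show ?thesis using that by simp
  next
    case (Suc k')
    then show ?thesis by (simp add: f_def)
  qed
  have S: "(\<Sum>i<m. f (ks i)) + m * d \<le> n * d + m"
  proof -
    have "(\<Sum>i<m. f (ks i) + d) \<le> (\<Sum>i<m. ks i * d + 1)"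
      by (rule sum_mono) (use ks fk in auto)
    then show ?thesis unfolding sum.distrib by (simp add: n_def sum_distrib_right)
  qed
  have "(\<Sum>i<m. f (ks i)) \<le> (n - 1) * d"
  proof (cases "m \<ge> 2")
    case True
    obtain m' d' where mm: "m = m' + 2" and dd: "d = d' + 2" using True d
      by (metis add.commute le_Suc_ex)
    have "m + d \<le> m * d" unfolding mm dd by (simp add: algebra_simps)
    then have "(\<Sum>i<m. f (ks i)) + d \<le> n * d" using S by linarith
    then show ?thesis by (simp add: diff_mult_distrib)
  next
    case False
    then have "m = 0 \<or> m = 1" by auto
    then show ?thesis
    proof
      assume "m = 0" then show ?thesis using n by simp
    next
      assume m1: "m = 1"
      then have "n = ks 0" by (simp add: n_def)
      then show ?thesis using m1 n n_def by (simp add: f_def)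
    qed
  qed
  then show ?thesis unfolding f_def n_def .
qed

theorem proposition1:
  fixes d :: nat and P :: "vec3 \<Rightarrow> complex"
  assumes "d \<ge> 2" and "is_ternary_form d P" and "curvilinear_rank d P \<ge> 2"
  shows "waring_rank d P \<le> (curvilinear_rank d P - 1) * d"
proof -
  define Q where "Q = (\<lambda>n. \<exists>(m::nat) (ks :: nat \<Rightarrow> nat) (l :: nat \<Rightarrow> nat \<Rightarrow> vec3)
       (c :: nat \<Rightarrow> nat \<Rightarrow> complex).
     (\<forall>i<m. ks i \<ge> 1 \<and> l i 0 \<noteq> (0,0,0) \<and> (ks i \<ge> 2 \<longrightarrow> indep2 (l i 0) (l i 1))) \<and>
     (\<forall>i<m. \<forall>i'<m. i \<noteq> i' \<longrightarrow> indep2 (l i 0) (l i' 0)) \<and>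
     n = (\<Sum>i<m. ks i) \<and>
     P = (\<lambda>x. \<Sum>i<m. \<Sum>j<ks i. c i j * jet_form d (ks i) (l i) j x))"
  have "Q (LEAST n. Q n)"
    by (rule LeastI_ex) (use cr_exists[OF assms(2)] in \<open>simp add: Q_def\<close>)
  moreover have "curvilinear_rank d P = (LEAST n. Q n)" unfolding curvilinear_rank_def Q_def ..
  ultimately have "Q (curvilinear_rank d P)" by simp
  then obtain m :: nat and ks l c where
    cond: "\<forall>i<m. ks i \<ge> 1 \<and> l i 0 \<noteq> (0,0,0) \<and> (ks i \<ge> 2 \<longrightarrow> indep2 (l i 0) (l i 1))" and
    cr: "curvilinear_rank d P = (\<Sum>i<m. ks i)" and
    P: "P = (\<lambda>x. \<Sum>i<m. \<Sum>j<ks i. c i j * jet_form d (ks i) (l i) j x)"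
    unfolding Q_def by blast
  have "dec d (\<Sum>i<m. (if ks i = 1 then 1 else (ks i - 1) * d)) P"
    unfolding P by (rule dec_sum) (use comp_dec_gen assms(1) cond in auto)
  then have "waring_rank d P \<le> (\<Sum>i<m. (if ks i = 1 then 1 else (ks i - 1) * d))" by (rule dec_rank)
  also have "\<dots> \<le> ((\<Sum>i<m. ks i) - 1) * d"
    using arith_bound[of d m ks] assms(1,3) cond cr by auto
  finally show ?thesis using cr by simp
qed

end
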